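(* For $\mathbf{x}=(x_0,x_1),\ \mathbf{y}=(y_0,y_1)\in\mathbb{R}^2$ let $\langle\mathbf{x},\mathbf{y}\rangle:=x_0y_0-x_1y_1$ and $$k(\mathbf{x},\mathbf{y})=\frac{\langle\mathbf{x},\mathbf{x}\rangle-\langle\mathbf{y},\mathbf{y}\rangle}{\langle\mathbf{x}+\mathbf{y},\mathbf{x}+\mathbf{y}\rangle}.$$ Define the momentum-energy map $$\mathbf{R}:(\mathbf{x},\mathbf{y})\mapsto(\mathbf{u},\mathbf{v}):=\big(\mathbf{y}+k(\mathbf{x},\mathbf{y})(\mathbf{x}+\mathbf{y}),\ \mathbf{x}-k(\mathbf{x},\mathbf{y})(\mathbf{x}+\mathbf{y})\big)$$ (defined where $\langle\mathbf{x}+\mathbf{y},\mathbf{x}+\mathbf{y}\rangle\neq 0$). Then $\mathbf{R}$ is a (non-parametric) quadrirational Yang--Baxter map, and it has Lax matrix $$\mathbf{L}(\mathbf{x},\zeta)=\begin{pmatrix}\zeta & x_0+x_1\\ x_0-x_1 & \zeta\end{pmatrix},$$ i.e. $\mathbf{L}(\mathbf{u},\zeta)\mathbf{L}(\mathbf{v},\zeta)=\mathbf{L}(\mathbf{y},\zeta)\mathbf{L}(\mathbf{x},\zeta)$ for all $\zeta\in\mathbb{C}$ whenever $(\mathbf{u},\mathbf{v})=\mathbf{R}(\mathbf{x},\mathbf{y})$.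
   Context: A map $R:\mathcal{X}\times\mathcal{X}\to\mathcal{X}\times\mathcal{X}$, $R(x,y)=(u(x,y),v(x,y))$, is a Yang--Baxter map if $R_{23}\circ R_{13}\circ R_{12}=R_{12}\circ R_{13}\circ R_{23}$ on $\mathcal{X}^3$, where $R_{12}(x,y,z)=(u(x,y),v(x,y),z)$, $R_{13}(x,y,z)=(u(x,z),y,v(x,z))$, $R_{23}(x,y,z)=(x,u(y,z),v(y,z))$. It is quadrirational if, for fixed $y$ and fixed $x$ respectively, the maps $u(\cdot,y)$ and $v(x,\cdot)$ are birational isomorphisms of $\mathcal{X}$ to itself. A matrix $L(x,\zeta)$ depending on $x\in\mathcal{X}$ and a spectral parameter $\zeta\in\mathbb{C}$ is a Lax matrix of $R$ if $L(u,\zeta)L(v,\zeta)=L(y,\zeta)L(x,\zeta)$ whenever $(u,v)=R(x,y)$. Here $\mathcal{X}=\mathbb{R}^2$ (maps understood generically, where defined). *)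

theory Defs
  imports "HOL-Analysis.Analysis" "HOL-Computational_Algebra.Polynomial"
begin

type_synonym pt = "real \<times> real"

definition mip :: "pt \<Rightarrow> pt \<Rightarrow> real" where
  "mip x y = fst x * fst y - snd x * snd y"

definition kfun :: "pt \<Rightarrow> pt \<Rightarrow> real" where
  "kfun x y = (mip x x - mip y y) / mip (x + y) (x + y)"

definition Rdef :: "pt \<Rightarrow> pt \<Rightarrow> bool" where
  "Rdef x y \<longleftrightarrow> mip (x + y) (x + y) \<noteq> 0"

definition uR :: "pt \<Rightarrow> pt \<Rightarrow> pt" where
  "uR x y = y + kfun x y *\<^sub>R (x + y)"

definition vR :: "pt \<Rightarrow> pt \<Rightarrow> pt" where
  "vR x y = x - kfun x y *\<^sub>R (x + y)"

definition Rmap :: "pt \<Rightarrow> pt \<Rightarrow> (pt \<times> pt) option" where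
  "Rmap x y = (if Rdef x y then Some (uR x y, vR x y) else None)"

definition R12 :: "pt \<times> pt \<times> pt \<Rightarrow> (pt \<times> pt \<times> pt) option" where
  "R12 t = (case t of (x, y, z) \<Rightarrow> map_option (\<lambda>(u, v). (u, v, z)) (Rmap x y))"
definition R13 :: "pt \<times> pt \<times> pt \<Rightarrow> (pt \<times> pt \<times> pt) option" where
  "R13 t = (case t of (x, y, z) \<Rightarrow> map_option (\<lambda>(u, v). (u, y, v)) (Rmap x z))"
definition R23 :: "pt \<times> pt \<times> pt \<Rightarrow> (pt \<times> pt \<times> pt) option" where
  "R23 t = (case t of (x, y, z) \<Rightarrow> map_option (\<lambda>(u, v). (x, u, v)) (Rmap y z))"

definition lhs_YB :: "pt \<times> pt \<times> pt \<Rightarrow> (pt \<times> pt \<times> pt) option" where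
  "lhs_YB t = Option.bind (Option.bind (R12 t) R13) R23"
definition rhs_YB :: "pt \<times> pt \<times> pt \<Rightarrow> (pt \<times> pt \<times> pt) option" where
  "rhs_YB t = Option.bind (Option.bind (R23 t) R13) R12"

definition yang_baxter :: bool where
  "yang_baxter \<longleftrightarrow> (\<forall>t.
     lhs_YB t \<noteq> None \<and> rhs_YB t \<noteq> None \<longrightarrow> lhs_YB t = rhs_YB t)"

text \<open>Bivariate real polynomials: polynomials in x1 with coefficients polynomials in x0.\<close>
definition eval2 :: "real poly poly \<Rightarrow> pt \<Rightarrow> real" where
  "eval2 p z = poly (map_poly (\<lambda>c. poly c (fst z)) p) (snd z)"

text \<open>A rational map R^2 -> R^2, given by (P0, Q0, P1, Q1), components P0/Q0 and P1/Q1.\<close>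
type_synonym ratmap = "real poly poly \<times> real poly poly \<times> real poly poly \<times> real poly poly"

definition is_ratmap :: "ratmap \<Rightarrow> bool" where
  "is_ratmap \<phi> = (case \<phi> of (P0, Q0, P1, Q1) \<Rightarrow> Q0 \<noteq> 0 \<and> Q1 \<noteq> 0)"

definition rdom :: "ratmap \<Rightarrow> pt set" where
  "rdom \<phi> = (case \<phi> of (P0, Q0, P1, Q1) \<Rightarrow> {z. eval2 Q0 z \<noteq> 0 \<and> eval2 Q1 z \<noteq> 0})"

definition rapp :: "ratmap \<Rightarrow> pt \<Rightarrow> pt" where
  "rapp \<phi> z = (case \<phi> of (P0, Q0, P1, Q1) \<Rightarrow> (eval2 P0 z / eval2 Q0 z, eval2 P1 z / eval2 Q1 z))"

text \<open>psi is a rational inverse of phi: psi o phi = id wherever defined, and the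
  set where the composite is defined is nonempty (hence Zariski-dense).\<close>
definition rat_left_inverse :: "ratmap \<Rightarrow> ratmap \<Rightarrow> bool" where
  "rat_left_inverse \<psi> \<phi> \<longleftrightarrow>
     {z \<in> rdom \<phi>. rapp \<phi> z \<in> rdom \<psi>} \<noteq> {} \<and>
     (\<forall>z \<in> rdom \<phi>. rapp \<phi> z \<in> rdom \<psi> \<longrightarrow> rapp \<psi> (rapp \<phi> z) = z)"

definition birational_on :: "pt set \<Rightarrow> (pt \<Rightarrow> pt) \<Rightarrow> bool" where
  "birational_on D f \<longleftrightarrow> (\<exists>\<phi> \<psi>. is_ratmap \<phi> \<and> is_ratmap \<psi> \<and>
     D \<inter> rdom \<phi> \<noteq> {} \<and> (\<forall>z \<in> D \<inter> rdom \<phi>. rapp \<phi> z = f z) \<and>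
     rat_left_inverse \<psi> \<phi> \<and> rat_left_inverse \<phi> \<psi>)"

definition quadrirational :: bool where
  "quadrirational \<longleftrightarrow>
     (\<forall>y. birational_on {x. Rdef x y} (\<lambda>x. uR x y)) \<and>
     (\<forall>x. birational_on {y. Rdef x y} (\<lambda>y. vR x y))"

definition Lax :: "pt \<Rightarrow> complex \<Rightarrow> complex ^ 2 ^ 2" where
  "Lax x \<zeta> = vector [vector [\<zeta>, complex_of_real (fst x + snd x)],
                      vector [complex_of_real (fst x - snd x), \<zeta>]]"

end

theory Submission
  imports Defs
begin

definition la :: "pt \<Rightarrow> real" where "la p = fst p + snd p"
definition lb :: "pt \<Rightarrow> real" where "lb p = fst p - snd p"

lemma pt_eq: "p = q \<longleftrightarrow> la p = la q \<and> lb p = lb q"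
  by (cases p; cases q) (auto simp: la_def lb_def)

lemma mip_lc: "mip x x = la x * lb x"
  by (simp add: mip_def la_def lb_def algebra_simps power2_eq_square)

lemma la_add: "la (x + y) = la x + la y" and lb_add: "lb (x + y) = lb x + lb y"
  by (auto simp: la_def lb_def)

lemma Rdef_lc: "Rdef x y \<longleftrightarrow> (la x + la y) \<noteq> 0 \<and> (lb x + lb y) \<noteq> 0"
  by (simp add: Rdef_def mip_lc la_add lb_add)

lemma kfun_lc: "kfun x y = (la x * lb x - la y * lb y) / ((la x + la y) * (lb x + lb y))"
  by (simp add: kfun_def mip_lc la_add lb_add)
lemma la_scale: "la (c *\<^sub>R p) = c * la p" and lb_scale: "lb (c *\<^sub>R p) = c * lb p"
  by (auto simp: la_def lb_def algebra_simps)
lemma la_diff: "la (x - y) = la x - la y" and lb_diff: "lb (x - y) = lb x - lb y"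
  by (auto simp: la_def lb_def)
lemma aux_all:
  assumes h: "(a::real) + c \<noteq> 0" "b + d \<noteq> 0"
  shows "c + (a*b - c*d) / ((a+c)*(b+d)) * (a+c) = b * (a+c)/(b+d)"
    "d + (a*b - c*d) / ((a+c)*(b+d)) * (b+d) = a * (b+d)/(a+c)"
    "a - (a*b - c*d) / ((a+c)*(b+d)) * (a+c) = d * (a+c)/(b+d)"
    "b - (a*b - c*d) / ((a+c)*(b+d)) * (b+d) = c * (b+d)/(a+c)"
proof -
  have 1: "(a*b - c*d) / ((a+c)*(b+d)) * (a+c) = (a*b - c*d) / (b+d)" using h by simp
  have 2: "(a*b - c*d) / ((a+c)*(b+d)) * (b+d) = (a*b - c*d) / (a+c)" using h by simp
  show "c + (a*b - c*d) / ((a+c)*(b+d)) * (a+c) = b * (a+c)/(b+d)" unfolding 1 using h by (simp add: field_simps)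
  show "d + (a*b - c*d) / ((a+c)*(b+d)) * (b+d) = a * (b+d)/(a+c)" unfolding 2 using h by (simp add: field_simps)
  show "a - (a*b - c*d) / ((a+c)*(b+d)) * (a+c) = d * (a+c)/(b+d)" unfolding 1 using h by (simp add: field_simps)
  show "b - (a*b - c*d) / ((a+c)*(b+d)) * (b+d) = c * (b+d)/(a+c)" unfolding 2 using h by (simp add: field_simps)
qed

lemma la_uR: "Rdef x y \<Longrightarrow> la (uR x y) = lb x * (la x + la y) / (lb x + lb y)"
  unfolding Rdef_lc uR_def la_add la_scale kfun_lc using aux_all(1) by blast
lemma lb_uR: "Rdef x y \<Longrightarrow> lb (uR x y) = la x * (lb x + lb y) / (la x + la y)"
  unfolding Rdef_lc uR_def lb_add lb_scale kfun_lc using aux_all(2) by blast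
lemma la_vR: "Rdef x y \<Longrightarrow> la (vR x y) = lb y * (la x + la y) / (lb x + lb y)"
  unfolding Rdef_lc vR_def la_diff la_add la_scale kfun_lc using aux_all(3) by blast
lemma lb_vR: "Rdef x y \<Longrightarrow> lb (vR x y) = la y * (lb x + lb y) / (la x + la y)"
  unfolding Rdef_lc vR_def lb_diff lb_add lb_scale kfun_lc using aux_all(4) by blast

lemma lhs_eq: "lhs_YB (x,y,z) = (if Rdef x y \<and> Rdef (uR x y) z \<and> Rdef (vR x y) (vR (uR x y) z) then
   Some (uR (uR x y) z, uR (vR x y) (vR (uR x y) z), vR (vR x y) (vR (uR x y) z)) else None)"
  by (simp add: lhs_YB_def R12_def R13_def R23_def Rmap_def)
lemma rhs_eq: "rhs_YB (x,y,z) = (if Rdef y z \<and> Rdef x (vR y z) \<and> Rdef (uR x (vR y z)) (uR y z) then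
   Some (uR (uR x (vR y z)) (uR y z), vR (uR x (vR y z)) (uR y z), vR x (vR y z)) else None)"
  by (simp add: rhs_YB_def R12_def R13_def R23_def Rmap_def)

lemma YB_point:
  assumes h1: "Rdef x y" "Rdef (uR x y) z" "Rdef (vR x y) (vR (uR x y) z)"
    and h2: "Rdef y z" "Rdef x (vR y z)" "Rdef (uR x (vR y z)) (uR y z)"
  shows "uR (uR x y) z = uR (uR x (vR y z)) (uR y z)
     \<and> uR (vR x y) (vR (uR x y) z) = vR (uR x (vR y z)) (uR y z)
     \<and> vR (vR x y) (vR (uR x y) z) = vR x (vR y z)"
proof -
  define xa xb ya yb za zb where "xa = la x" "xb = lb x" "ya = la y" "yb = lb y" "za = la z" "zb = lb z"
  define p q r t where "p = xa+ya" "q = xb+yb" "r = ya+za" "t = yb+zb"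
  define A B where "A = xb*p+za*q" "B = xa*q+zb*p"
  define C E where "C = yb*B+zb*A" "E = ya*A+za*B"
  define F G where "F = xa*t+zb*r" "G = xb*r+za*t"
  define H K where "H = xb*F+yb*G" "K = xa*G+ya*F"
  have pq: "p \<noteq> 0" "q \<noteq> 0" using h1(1) unfolding Rdef_lc p_q_r_t_def xa_xb_ya_yb_za_zb_def by auto
  have rt: "r \<noteq> 0" "t \<noteq> 0" using h2(1) unfolding Rdef_lc p_q_r_t_def xa_xb_ya_yb_za_zb_def by auto
  have u1: "la (uR x y) = xb*p/q" "lb (uR x y) = xa*q/p"
    using la_uR[OF h1(1)] lb_uR[OF h1(1)] unfolding p_q_r_t_def xa_xb_ya_yb_za_zb_def by auto
  have v1: "la (vR x y) = yb*p/q" "lb (vR x y) = ya*q/p"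
    using la_vR[OF h1(1)] lb_vR[OF h1(1)] unfolding p_q_r_t_def xa_xb_ya_yb_za_zb_def by auto
  have AB: "A \<noteq> 0" "B \<noteq> 0" using h1(2) pq unfolding Rdef_lc u1 A_B_def
    by (auto simp: field_simps xa_xb_ya_yb_za_zb_def)
  have s1: "la (uR x y) + za = A/q" "lb (uR x y) + zb = B/p"
    using pq unfolding u1 A_B_def by (auto simp: field_simps)
  have u2: "la (uR (uR x y) z) = xa*A/B" "lb (uR (uR x y) z) = xb*B/A"
    using la_uR[OF h1(2), unfolded xa_xb_ya_yb_za_zb_def[symmetric], unfolded s1, unfolded u1] lb_uR[OF h1(2), unfolded xa_xb_ya_yb_za_zb_def[symmetric], unfolded s1, unfolded u1] pq AB
    by (auto simp: field_simps)
  have v2: "la (vR (uR x y) z) = zb*p*A/(q*B)" "lb (vR (uR x y) z) = za*q*B/(p*A)"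
    using la_vR[OF h1(2), unfolded xa_xb_ya_yb_za_zb_def[symmetric], unfolded s1, unfolded u1] lb_vR[OF h1(2), unfolded xa_xb_ya_yb_za_zb_def[symmetric], unfolded s1, unfolded u1] pq AB
    by (auto simp: field_simps)
  have s2: "la (vR x y) + la (vR (uR x y) z) = p*C/(q*B)" "lb (vR x y) + lb (vR (uR x y) z) = q*E/(p*A)"
    using pq AB unfolding v1 v2 C_E_def by (auto simp: field_simps)
  have CE: "C \<noteq> 0" "E \<noteq> 0" using h1(3) pq AB unfolding Rdef_lc s2 by auto
  have u3: "la (uR (vR x y) (vR (uR x y) z)) = ya*p*A*C/(q*B*E)" "lb (uR (vR x y) (vR (uR x y) z)) = yb*q*B*E/(p*A*C)"
    using la_uR[OF h1(3), unfolded xa_xb_ya_yb_za_zb_def[symmetric], unfolded s2, unfolded v1] lb_uR[OF h1(3), unfolded xa_xb_ya_yb_za_zb_def[symmetric], unfolded s2, unfolded v1] pq AB CE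
    by (auto simp: field_simps)
  have v3: "la (vR (vR x y) (vR (uR x y) z)) = za*p*C/(q*E)" "lb (vR (vR x y) (vR (uR x y) z)) = zb*q*E/(p*C)"
    using la_vR[OF h1(3), unfolded xa_xb_ya_yb_za_zb_def[symmetric], unfolded s2, unfolded v2] lb_vR[OF h1(3), unfolded xa_xb_ya_yb_za_zb_def[symmetric], unfolded s2, unfolded v2] pq AB CE
    by (auto simp: field_simps)
  have a1: "la (uR y z) = yb*r/t" "lb (uR y z) = ya*t/r"
    using la_uR[OF h2(1)] lb_uR[OF h2(1)] unfolding p_q_r_t_def xa_xb_ya_yb_za_zb_def by auto
  have b1: "la (vR y z) = zb*r/t" "lb (vR y z) = za*t/r"
    using la_vR[OF h2(1)] lb_vR[OF h2(1)] unfolding p_q_r_t_def xa_xb_ya_yb_za_zb_def by auto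
  have s3: "xa + la (vR y z) = F/t" "xb + lb (vR y z) = G/r"
    using rt unfolding b1 F_G_def by (auto simp: field_simps)
  have FG: "F \<noteq> 0" "G \<noteq> 0" using h2(2) rt unfolding Rdef_lc xa_xb_ya_yb_za_zb_def[symmetric] s3 by auto
  have c1: "la (uR x (vR y z)) = xb*r*F/(t*G)" "lb (uR x (vR y z)) = xa*t*G/(r*F)"
    using la_uR[OF h2(2), unfolded xa_xb_ya_yb_za_zb_def[symmetric], unfolded s3] lb_uR[OF h2(2), unfolded xa_xb_ya_yb_za_zb_def[symmetric], unfolded s3] rt FG
    by (auto simp: field_simps)
  have d1: "la (vR x (vR y z)) = za*F/G" "lb (vR x (vR y z)) = zb*G/F"
    using la_vR[OF h2(2), unfolded xa_xb_ya_yb_za_zb_def[symmetric], unfolded s3, unfolded b1] lb_vR[OF h2(2), unfolded xa_xb_ya_yb_za_zb_def[symmetric], unfolded s3, unfolded b1] rt FG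
    by (auto simp: field_simps)
  have s4: "la (uR x (vR y z)) + la (uR y z) = r*H/(t*G)" "lb (uR x (vR y z)) + lb (uR y z) = t*K/(r*F)"
    using rt FG unfolding c1 a1 H_K_def by (auto simp: field_simps)
  have HK: "H \<noteq> 0" "K \<noteq> 0" using h2(3) rt FG unfolding Rdef_lc s4 by auto
  have e1: "la (uR (uR x (vR y z)) (uR y z)) = xa*r*H/(t*K)" "lb (uR (uR x (vR y z)) (uR y z)) = xb*t*K/(r*H)"
    using la_uR[OF h2(3), unfolded xa_xb_ya_yb_za_zb_def[symmetric], unfolded s4, unfolded c1] lb_uR[OF h2(3), unfolded xa_xb_ya_yb_za_zb_def[symmetric], unfolded s4, unfolded c1] rt FG HK
    by (auto simp: field_simps)
  have f1: "la (vR (uR x (vR y z)) (uR y z)) = ya*r*F*H/(t*G*K)" "lb (vR (uR x (vR y z)) (uR y z)) = yb*t*G*K/(r*F*H)"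
    using la_vR[OF h2(3), unfolded xa_xb_ya_yb_za_zb_def[symmetric], unfolded s4, unfolded a1] lb_vR[OF h2(3), unfolded xa_xb_ya_yb_za_zb_def[symmetric], unfolded s4, unfolded a1] rt FG HK
    by (auto simp: field_simps)
  have id1: "A*t*K = B*r*H" unfolding H_K_def F_G_def A_B_def p_q_r_t_def by algebra
  have id2: "p*C*G = q*E*F" unfolding C_E_def H_K_def F_G_def A_B_def p_q_r_t_def by algebra
  have r1: "A/B = r*H/(t*K)" using id1 AB HK rt by (simp add: frac_eq_eq ac_simps)
  have r2: "p*C/(q*E) = F/G" using id2 pq CE FG by (simp add: frac_eq_eq ac_simps)
  have r3: "B/A = t*K/(r*H)" using r1 by (metis inverse_divide)
  have r4: "q*E/(p*C) = G/F" using r2 by (metis inverse_divide)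
  have g1: "la (uR (uR x y) z) = la (uR (uR x (vR y z)) (uR y z))"
    unfolding u2 e1 using r1 by (metis times_divide_eq_right mult.assoc)
  have g2: "lb (uR (uR x y) z) = lb (uR (uR x (vR y z)) (uR y z))"
    unfolding u2 e1 using r3 by (metis times_divide_eq_right mult.assoc)
  have g5: "la (vR (vR x y) (vR (uR x y) z)) = la (vR x (vR y z))"
    unfolding v3 d1 using r2 by (metis times_divide_eq_right mult.assoc)
  have g6: "lb (vR (vR x y) (vR (uR x y) z)) = lb (vR x (vR y z))"
    unfolding v3 d1 using r4 by (metis times_divide_eq_right mult.assoc)
  have "p*A*C/(q*B*E) = (A/B) * (p*C/(q*E))" by (simp add: ac_simps)
  hence r5: "p*A*C/(q*B*E) = r*F*H/(t*G*K)" unfolding r1 r2 by (simp add: ac_simps)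
  have "q*B*E/(p*A*C) = (B/A) * (q*E/(p*C))" by (simp add: ac_simps)
  hence r6: "q*B*E/(p*A*C) = t*G*K/(r*F*H)" unfolding r3 r4 by (simp add: ac_simps)
  have g3: "la (uR (vR x y) (vR (uR x y) z)) = la (vR (uR x (vR y z)) (uR y z))"
    unfolding u3 f1 using r5 by (metis times_divide_eq_right mult.assoc)
  have g4: "lb (uR (vR x y) (vR (uR x y) z)) = lb (vR (uR x (vR y z)) (uR y z))"
    unfolding u3 f1 using r6 by (metis times_divide_eq_right mult.assoc)
  show ?thesis using g1 g2 g3 g4 g5 g6 pt_eq by blast
qed


lemma map_poly_add_hom: "(\<And>a b. f (a + b) = f a + f b) \<Longrightarrow> f 0 = 0 \<Longrightarrow> map_poly f (p + q) = map_poly f p + map_poly f q"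
  by (intro poly_eqI) (simp add: coeff_map_poly)
lemma map_poly_diff_hom: "(\<And>a b. f (a - b) = f a - f b) \<Longrightarrow> f 0 = 0 \<Longrightarrow> map_poly f (p - q) = map_poly f p - map_poly f q"
  by (intro poly_eqI) (simp add: coeff_map_poly)

lemma ev_0[simp]: "eval2 0 z = 0" by (simp add: eval2_def)
lemma ev_add[simp]: "eval2 (p + q) z = eval2 p z + eval2 q z"
  unfolding eval2_def by (subst map_poly_add_hom) auto
lemma ev_diff[simp]: "eval2 (p - q) z = eval2 p z - eval2 q z"
  unfolding eval2_def by (subst map_poly_diff_hom) auto
lemma ev_smult: "eval2 (smult a q) z = poly a (fst z) * eval2 q z"
  unfolding eval2_def by (subst map_poly_smult) auto
lemma ev_pCons: "eval2 (pCons a q) z = poly a (fst z) + snd z * eval2 q z"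
  unfolding eval2_def by (subst map_poly_pCons) auto
lemma ev_mult[simp]: "eval2 (p * q) z = eval2 p z * eval2 q z"
proof (induction p)
  case 0
  then show ?case by (simp add: eval2_def)
next
  case (pCons a p)
  then show ?case by (simp add: ev_smult ev_pCons algebra_simps)
qed

definition X0p :: "real poly poly" where "X0p = [:[:0,1:]:]"
definition X1p :: "real poly poly" where "X1p = [:0,1:]"
definition Kp :: "real \<Rightarrow> real poly poly" where "Kp c = [:[:c:]:]"
lemma ev_X0[simp]: "eval2 X0p z = fst z" by (simp add: X0p_def ev_pCons)
lemma ev_X1[simp]: "eval2 X1p z = snd z" by (simp add: X1p_def ev_pCons)
lemma ev_K[simp]: "eval2 (Kp c) z = c" by (simp add: Kp_def ev_pCons)


definition Ap :: "real poly poly" where "Ap = X0p + X1p"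
definition Bp :: "real poly poly" where "Bp = X0p - X1p"
lemma ev_A[simp]: "eval2 Ap z = la z" by (simp add: Ap_def la_def)
lemma ev_B[simp]: "eval2 Bp z = lb z" by (simp add: Bp_def lb_def)

definition phiR :: "real \<Rightarrow> real \<Rightarrow> ratmap" where
  "phiR ca cb = (Bp*(Ap+Kp ca)*(Ap+Kp ca) + Ap*(Bp+Kp cb)*(Bp+Kp cb), Kp 2*(Ap+Kp ca)*(Bp+Kp cb),
                 Bp*(Ap+Kp ca)*(Ap+Kp ca) - Ap*(Bp+Kp cb)*(Bp+Kp cb), Kp 2*(Ap+Kp ca)*(Bp+Kp cb))"
definition psiR :: "real \<Rightarrow> real \<Rightarrow> ratmap" where
  "psiR ca cb = (Bp*(Kp ca-Ap)*(Kp ca-Ap) + Ap*(Kp cb-Bp)*(Kp cb-Bp), Kp 2*(Kp ca-Ap)*(Kp cb-Bp),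
                 Bp*(Kp ca-Ap)*(Kp ca-Ap) - Ap*(Kp cb-Bp)*(Kp cb-Bp), Kp 2*(Kp ca-Ap)*(Kp cb-Bp))"

lemma rdom_phi: "z \<in> rdom (phiR ca cb) \<longleftrightarrow> la z + ca \<noteq> 0 \<and> lb z + cb \<noteq> 0"
  by (auto simp add: rdom_def phiR_def)
lemma rdom_psi: "z \<in> rdom (psiR ca cb) \<longleftrightarrow> ca - la z \<noteq> 0 \<and> cb - lb z \<noteq> 0"
  by (auto simp add: rdom_def psiR_def)
lemma frac_aux:
  fixes a b c d :: real
  assumes "c \<noteq> 0" "d \<noteq> 0"
  shows "(b*c*c + a*d*d)/(2*c*d) + (b*c*c - a*d*d)/(2*c*d) = b*c/d"
    and "(b*c*c + a*d*d)/(2*c*d) - (b*c*c - a*d*d)/(2*c*d) = a*d/c"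
proof -
  have "(b*c*c + a*d*d)/(2*c*d) + (b*c*c - a*d*d)/(2*c*d) = (2*(b*c)*c)/(2*d*c)"
    by (simp add: add_divide_distrib[symmetric] ac_simps)
  also have "\<dots> = b*c/d" using assms by simp
  finally show "(b*c*c + a*d*d)/(2*c*d) + (b*c*c - a*d*d)/(2*c*d) = b*c/d" .
  have "(b*c*c + a*d*d)/(2*c*d) - (b*c*c - a*d*d)/(2*c*d) = (2*(a*d)*d)/(2*c*d)"
    by (simp add: diff_divide_distrib[symmetric] ac_simps)
  also have "\<dots> = a*d/c" using assms by simp
  finally show "(b*c*c + a*d*d)/(2*c*d) - (b*c*c - a*d*d)/(2*c*d) = a*d/c" .
qed
lemma la_pair: "la (a, b) = a + b" and lb_pair: "lb (a, b) = a - b" by (auto simp: la_def lb_def)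
lemma la_phi: "z \<in> rdom (phiR ca cb) \<Longrightarrow> la (rapp (phiR ca cb) z) = lb z*(la z+ca)/(lb z+cb)"
  unfolding rdom_phi by (simp only: rapp_def phiR_def prod.case ev_mult ev_add ev_diff ev_K ev_A ev_B la_pair) (rule frac_aux; simp)
lemma lb_phi: "z \<in> rdom (phiR ca cb) \<Longrightarrow> lb (rapp (phiR ca cb) z) = la z*(lb z+cb)/(la z+ca)"
  unfolding rdom_phi by (simp only: rapp_def phiR_def prod.case ev_mult ev_add ev_diff ev_K ev_A ev_B lb_pair) (rule frac_aux; simp)
lemma la_psi: "z \<in> rdom (psiR ca cb) \<Longrightarrow> la (rapp (psiR ca cb) z) = lb z*(ca - la z)/(cb - lb z)"
  unfolding rdom_psi by (simp only: rapp_def psiR_def prod.case ev_mult ev_add ev_diff ev_K ev_A ev_B la_pair) (rule frac_aux; simp)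
lemma lb_psi: "z \<in> rdom (psiR ca cb) \<Longrightarrow> lb (rapp (psiR ca cb) z) = la z*(cb - lb z)/(ca - la z)"
  unfolding rdom_psi by (simp only: rapp_def psiR_def prod.case ev_mult ev_add ev_diff ev_K ev_A ev_B lb_pair) (rule frac_aux; simp)

lemma cancel3: "(m::real) \<noteq> 0 \<Longrightarrow> c \<noteq> 0 \<Longrightarrow> d \<noteq> 0 \<Longrightarrow> (a*d/c)*(m/d)/(m/c) = a"
  by (simp add: field_simps)
lemma inv_alg1:
  fixes a b ca cb :: real
  assumes h: "a + ca \<noteq> 0" "b + cb \<noteq> 0"
    and h2: "ca - b*(a+ca)/(b+cb) \<noteq> 0" "cb - a*(b+cb)/(a+ca) \<noteq> 0"
  shows "(a*(b+cb)/(a+ca)) * (ca - b*(a+ca)/(b+cb)) / (cb - a*(b+cb)/(a+ca)) = a"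
    and "(b*(a+ca)/(b+cb)) * (cb - a*(b+cb)/(a+ca)) / (ca - b*(a+ca)/(b+cb)) = b"
proof -
  have e1: "ca - b*(a+ca)/(b+cb) = (ca*cb - a*b)/(b+cb)" using h by (simp add: field_simps)
  have e2: "cb - a*(b+cb)/(a+ca) = (ca*cb - a*b)/(a+ca)" using h by (simp add: field_simps)
  have m: "ca*cb - a*b \<noteq> 0" using h2 e1 by auto
  show "(a*(b+cb)/(a+ca)) * (ca - b*(a+ca)/(b+cb)) / (cb - a*(b+cb)/(a+ca)) = a"
    unfolding e1 e2 by (rule cancel3) (use h m in auto)
  show "(b*(a+ca)/(b+cb)) * (cb - a*(b+cb)/(a+ca)) / (ca - b*(a+ca)/(b+cb)) = b"
    unfolding e1 e2 by (rule cancel3) (use h m in auto)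
qed
lemma inv_alg2:
  fixes a b ca cb :: real
  assumes h: "ca - a \<noteq> 0" "cb - b \<noteq> 0"
    and h2: "b*(ca-a)/(cb-b) + ca \<noteq> 0" "a*(cb-b)/(ca-a) + cb \<noteq> 0"
  shows "(a*(cb-b)/(ca-a)) * (b*(ca-a)/(cb-b) + ca) / (a*(cb-b)/(ca-a) + cb) = a"
    and "(b*(ca-a)/(cb-b)) * (a*(cb-b)/(ca-a) + cb) / (b*(ca-a)/(cb-b) + ca) = b"
proof -
  have e1: "b*(ca-a)/(cb-b) + ca = (ca*cb - a*b)/(cb-b)" using h by (simp add: field_simps)
  have e2: "a*(cb-b)/(ca-a) + cb = (ca*cb - a*b)/(ca-a)" using h by (simp add: field_simps)
  have m: "ca*cb - a*b \<noteq> 0" using h2 e1 by auto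
  show "(a*(cb-b)/(ca-a)) * (b*(ca-a)/(cb-b) + ca) / (a*(cb-b)/(ca-a) + cb) = a"
    unfolding e1 e2 by (rule cancel3) (use h m in auto)
  show "(b*(ca-a)/(cb-b)) * (a*(cb-b)/(ca-a) + cb) / (b*(ca-a)/(cb-b) + ca) = b"
    unfolding e1 e2 by (rule cancel3) (use h m in auto)
qed

lemma rdom_ratmap: "z \<in> rdom \<phi> \<Longrightarrow> is_ratmap \<phi>"
  by (cases \<phi>) (auto simp: rdom_def is_ratmap_def)

lemma bir_u: "birational_on {x. Rdef x y} (\<lambda>x. uR x y)"
proof -
  define ca cb where "ca = la y" "cb = lb y"
  define t where "t = 2*\<bar>fst y\<bar> + 1"
  have tpos: "t > 0" unfolding t_def by simp
  have t2: "ca - (t - cb) \<noteq> 0" "cb - (t - ca) \<noteq> 0"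
    unfolding t_def ca_cb_def la_def lb_def by auto
  define z0 :: pt where "z0 = ((t - ca + (t - cb))/2, ((t-ca) - (t-cb))/2)"
  have z0: "la z0 = t - ca" "lb z0 = t - cb" unfolding z0_def la_def lb_def by (simp_all add: field_simps)
  have z0R: "Rdef z0 y" unfolding Rdef_lc z0 ca_cb_def[symmetric] using tpos by auto
  have z0d: "z0 \<in> rdom (phiR ca cb)" unfolding rdom_phi z0 using tpos by auto
  have w0: "la (rapp (phiR ca cb) z0) = t - cb" "lb (rapp (phiR ca cb) z0) = t - ca"
    using la_phi[OF z0d] lb_phi[OF z0d] tpos unfolding z0 by auto
  have w0d: "rapp (phiR ca cb) z0 \<in> rdom (psiR ca cb)" unfolding rdom_psi w0 using t2 by auto
  have inv1: "rapp (psiR ca cb) (rapp (phiR ca cb) z) = z"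
    if "z \<in> rdom (phiR ca cb)" "rapp (phiR ca cb) z \<in> rdom (psiR ca cb)" for z
  proof -
    note d = that(1)[unfolded rdom_phi] that(2)[unfolded rdom_psi la_phi[OF that(1)] lb_phi[OF that(1)]]
    show ?thesis unfolding pt_eq la_psi[OF that(2)] lb_psi[OF that(2)] la_phi[OF that(1)] lb_phi[OF that(1)]
      using inv_alg1[of "la z" ca "lb z" cb] d by auto
  qed
  have inv2: "rapp (phiR ca cb) (rapp (psiR ca cb) z) = z"
    if "z \<in> rdom (psiR ca cb)" "rapp (psiR ca cb) z \<in> rdom (phiR ca cb)" for z
  proof -
    note d = that(1)[unfolded rdom_psi] that(2)[unfolded rdom_phi la_psi[OF that(1)] lb_psi[OF that(1)]]
    show ?thesis unfolding pt_eq la_psi[OF that(1)] lb_psi[OF that(1)] la_phi[OF that(2)] lb_phi[OF that(2)]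
      using inv_alg2[of ca "la z" cb "lb z"] d by auto
  qed
  have agree: "rapp (phiR ca cb) z = uR z y" if "z \<in> {x. Rdef x y} \<inter> rdom (phiR ca cb)" for z
  proof -
    have "Rdef z y" "z \<in> rdom (phiR ca cb)" using that by auto
    then show ?thesis unfolding pt_eq using la_phi lb_phi la_uR lb_uR ca_cb_def by auto
  qed
  show ?thesis unfolding birational_on_def
  proof (intro exI conjI)
    show "is_ratmap (phiR ca cb)" using rdom_ratmap[OF z0d] .
    show "is_ratmap (psiR ca cb)" using rdom_ratmap[OF w0d] .
    show "{x. Rdef x y} \<inter> rdom (phiR ca cb) \<noteq> {}" using z0R z0d by auto
    show "\<forall>z\<in>{x. Rdef x y} \<inter> rdom (phiR ca cb). rapp (phiR ca cb) z = uR z y" using agree by blast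
    show "rat_left_inverse (psiR ca cb) (phiR ca cb)" unfolding rat_left_inverse_def
      using z0d w0d inv1 by blast
    show "rat_left_inverse (phiR ca cb) (psiR ca cb)" unfolding rat_left_inverse_def
      using w0d inv1[OF z0d w0d] z0d inv2 by (metis (no_types, lifting) empty_iff mem_Collect_eq)
  qed
qed

lemma Rdef_sym: "Rdef x y = Rdef y x" unfolding Rdef_def by (simp add: add.commute)
lemma vR_uR: "vR x y = uR y x"
proof -
  have k: "kfun y x = - kfun x y" unfolding kfun_def by (simp add: add.commute diff_divide_distrib)
  show ?thesis unfolding vR_def uR_def k by (simp add: add.commute)
qed
lemma cancel2: "(c::real) \<noteq> 0 \<Longrightarrow> d \<noteq> 0 \<Longrightarrow> (a*c/d)*(b*d/c) = b*a"
  by simp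

lemma yb_thm: yang_baxter
  unfolding yang_baxter_def
proof (intro allI impI)
  fix t :: "pt \<times> pt \<times> pt"
  assume a: "lhs_YB t \<noteq> None \<and> rhs_YB t \<noteq> None"
  obtain x y z where t: "t = (x, y, z)" by (cases t) auto
  show "lhs_YB t = rhs_YB t" using a YB_point unfolding t lhs_eq rhs_eq
    by (auto split: if_splits)
qed

lemma quad_thm: quadrirational
  unfolding quadrirational_def
proof (intro conjI allI)
  fix y show "birational_on {x. Rdef x y} (\<lambda>x. uR x y)" by (rule bir_u)
next
  fix x show "birational_on {y. Rdef x y} (\<lambda>y. vR x y)"
    unfolding vR_uR Rdef_sym[of x] by (rule bir_u)
qed

lemma lin:
  fixes z U V X Y :: complex
  assumes "U + V = Y + X"
  shows "z*V + U*z = z*X + Y*z" "U*z + z*V = Y*z + z*X"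
proof -
  have "z*V + U*z = z*(U+V)" "U*z + z*V = z*(U+V)" "z*X + Y*z = z*(Y+X)" "Y*z + z*X = z*(Y+X)"
    by (simp_all add: algebra_simps)
  then show "z*V + U*z = z*X + Y*z" "U*z + z*V = Y*z + z*X" using assms by simp_all
qed

lemma lax_thm:
  assumes "Rmap x y = Some (u, v)"
  shows "Lax u \<zeta> ** Lax v \<zeta> = Lax y \<zeta> ** Lax x \<zeta>"
proof -
  have R: "Rdef x y" and uv: "u = uR x y" "v = vR x y" using assms by (auto simp: Rmap_def split: if_splits)
  have pq: "la x + la y \<noteq> 0" "lb x + lb y \<noteq> 0" using R Rdef_lc by auto
  have e1: "la u * lb v = la y * lb x" unfolding uv la_uR[OF R] lb_vR[OF R] using pq by (simp add: cancel2)
  have e2: "lb u * la v = lb y * la x" unfolding uv lb_uR[OF R] la_vR[OF R] using pq by (simp add: cancel2)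
  have e3: "la u + la v = la y + la x" unfolding uv uR_def vR_def la_def by simp
  have e4: "lb u + lb v = lb y + lb x" unfolding uv uR_def vR_def lb_def by simp
  have c1: "complex_of_real (fst u + snd u) * complex_of_real (fst v - snd v) = complex_of_real (fst y + snd y) * complex_of_real (fst x - snd x)"
    using e1 unfolding la_def lb_def of_real_mult[symmetric] by simp
  have c2: "complex_of_real (fst u - snd u) * complex_of_real (fst v + snd v) = complex_of_real (fst y - snd y) * complex_of_real (fst x + snd x)"
    using e2 unfolding la_def lb_def of_real_mult[symmetric] by simp
  have c3: "complex_of_real (fst u + snd u) + complex_of_real (fst v + snd v) = complex_of_real (fst y + snd y) + complex_of_real (fst x + snd x)"
    using e3 unfolding la_def lb_def of_real_add[symmetric] by simp
  have c4: "complex_of_real (fst u - snd u) + complex_of_real (fst v - snd v) = complex_of_real (fst y - snd y) + complex_of_real (fst x - snd x)"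
    using e4 unfolding la_def lb_def of_real_add[symmetric] by simp
  show ?thesis
    unfolding vec_eq_iff forall_2 Lax_def matrix_matrix_mult_def
    apply (simp add: sum_2 del: of_real_add of_real_diff)
    using c1 c2 lin[OF c3] lin[OF c4] by (simp del: of_real_add of_real_diff)
qed

theorem proposition3p1:
  shows "yang_baxter \<and> quadrirational \<and>
    (\<forall>x y u v. Rmap x y = Some (u, v) \<longrightarrow>
       (\<forall>\<zeta>::complex. Lax u \<zeta> ** Lax v \<zeta> = Lax y \<zeta> ** Lax x \<zeta>))"
  using yb_thm quad_thm lax_thm by blast

end
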